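(* Let $Y$ be a normal solid vector space and $(X,d)$ a cone metric space over $Y$. Then for a sequence $(x_n)$ in $X$ and $x\in X$: $x_n\to x$ in $X$ if and only if $d(x_n,x)\to0$ in $Y$.
   Context: Vector space with convergence: a real vector space $Y$ with a relation $\to$ between sequences in $Y$ and points of $Y$ (uniqueness of limits not assumed) such that (C1) $x_n\to x$, $y_n\to y$ imply $x_n+y_n\to x+y$; (C2) $x_n\to x$, $\lambda\in\mathbb R$ imply $\lambda x_n\to\lambda x$; (C3) $\lambda_n\to\lambda$ in $\mathbb R$ imply $\lambda_n x\to\lambda x$. $A\subseteq Y$ is open if $x_n\to x\in A$ implies $x_n\in A$ for all but finitely many $n$; closed if $x_n\to x$, $x_n\in A$ $\forall n$ imply $x\in A$; $A^\circ$ is the union of all open subsets of $A$. A cone is a nonempty closed $K$ with $\lambda K\subseteq K$ ($\lambda\ge0$), $K+K\subseteq K$, $K\cap(-K)=\{0\}$; solid if $K\ne\{0\}$, $K^\circ\ne\emptyset$. A vector ordering is a partial order $\preceq$ with (V1) $x\preceq y\Rightarrow x+z\preceq y+z$; (V2) $\lambda\ge0$, $x\preceq y\Rightarrow\lambda x\preceq\lambda y$; (V3) $x_n\to x$, $y_n\to y$, $x_n\preceq y_n$ $\forall n\Rightarrow x\preceq y$. Solid vector space: positive cone $K=\{x:x\succeq0\}$ solid, with $x\prec y$ iff $y-x\in K^\circ$. Normal: whenever $x_n\preceq y_n\preceq z_n$ for all $n$, $x_n\to x$, $z_n\to x$, then $y_n\to x$. Cone metric space over $Y$: nonempty $X$ with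 $d\colon X\times X\to Y$, $d(x,y)\succeq0$, $d(x,y)=0$ iff $x=y$, $d(x,y)=d(y,x)$, $d(x,y)\preceq d(x,z)+d(z,y)$. Convergence in $X$: $x_n\to x$ iff for every $c\succ0$, $d(x_n,x)\prec c$ for all but finitely many $n$. *)

theory Defs
  imports Complex_Main
begin

type_synonym 'y convergence = "(nat \<Rightarrow> 'y) \<Rightarrow> 'y \<Rightarrow> bool"

text \<open>Vector space with convergence: axioms (C1)-(C3); uniqueness of limits not assumed.\<close>
definition vs_conv :: "('y::real_vector) convergence \<Rightarrow> bool" where
  "vs_conv conv \<longleftrightarrow>
     (\<forall>xs x ys y. conv xs x \<longrightarrow> conv ys y \<longrightarrow> conv (\<lambda>n. xs n + ys n) (x + y)) \<and>
     (\<forall>xs x (r::real). conv xs x \<longrightarrow> conv (\<lambda>n. r *\<^sub>R xs n) (r *\<^sub>R x)) \<and>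
     (\<forall>(ls::nat \<Rightarrow> real) l x. ls \<longlonglongrightarrow> l \<longrightarrow> conv (\<lambda>n. ls n *\<^sub>R x) (l *\<^sub>R x))"

definition open_conv :: "'y convergence \<Rightarrow> 'y set \<Rightarrow> bool" where
  "open_conv conv A \<longleftrightarrow>
     (\<forall>xs x. conv xs x \<longrightarrow> x \<in> A \<longrightarrow> (\<forall>\<^sub>F n in sequentially. xs n \<in> A))"

definition closed_conv :: "'y convergence \<Rightarrow> 'y set \<Rightarrow> bool" where
  "closed_conv conv A \<longleftrightarrow> (\<forall>xs x. conv xs x \<longrightarrow> (\<forall>n. xs n \<in> A) \<longrightarrow> x \<in> A)"

definition interior_conv :: "'y convergence \<Rightarrow> 'y set \<Rightarrow> 'y set" where
  "interior_conv conv A = \<Union>{U. U \<subseteq> A \<and> open_conv conv U}"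

definition is_cone :: "('y::real_vector) convergence \<Rightarrow> 'y set \<Rightarrow> bool" where
  "is_cone conv K \<longleftrightarrow> K \<noteq> {} \<and> closed_conv conv K \<and>
     (\<forall>r::real. \<forall>x\<in>K. r \<ge> 0 \<longrightarrow> r *\<^sub>R x \<in> K) \<and>
     (\<forall>x\<in>K. \<forall>y\<in>K. x + y \<in> K) \<and> K \<inter> uminus ` K = {0}"

definition vector_ordering :: "('y::real_vector) convergence \<Rightarrow> ('y \<Rightarrow> 'y \<Rightarrow> bool) \<Rightarrow> bool" where
  "vector_ordering conv le \<longleftrightarrow>
     (\<forall>x. le x x) \<and> (\<forall>x y z. le x y \<longrightarrow> le y z \<longrightarrow> le x z) \<and>
     (\<forall>x y. le x y \<longrightarrow> le y x \<longrightarrow> x = y) \<and>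
     (\<forall>x y z. le x y \<longrightarrow> le (x + z) (y + z)) \<and>
     (\<forall>(r::real) x y. r \<ge> 0 \<longrightarrow> le x y \<longrightarrow> le (r *\<^sub>R x) (r *\<^sub>R y)) \<and>
     (\<forall>xs x ys y. conv xs x \<longrightarrow> conv ys y \<longrightarrow> (\<forall>n. le (xs n) (ys n)) \<longrightarrow> le x y)"

definition pos_cone :: "('y::real_vector \<Rightarrow> 'y \<Rightarrow> bool) \<Rightarrow> 'y set" where
  "pos_cone le = {x. le 0 x}"

definition solid_vs :: "('y::real_vector) convergence \<Rightarrow> ('y \<Rightarrow> 'y \<Rightarrow> bool) \<Rightarrow> bool" where
  "solid_vs conv le \<longleftrightarrow> vs_conv conv \<and> vector_ordering conv le \<and>
     is_cone conv (pos_cone le) \<and> pos_cone le \<noteq> {0} \<and> interior_conv conv (pos_cone le) \<noteq> {}"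

definition strict_le :: "('y::real_vector) convergence \<Rightarrow> ('y \<Rightarrow> 'y \<Rightarrow> bool) \<Rightarrow> 'y \<Rightarrow> 'y \<Rightarrow> bool" where
  "strict_le conv le x y \<longleftrightarrow> y - x \<in> interior_conv conv (pos_cone le)"

definition normal_vs :: "('y::real_vector) convergence \<Rightarrow> ('y \<Rightarrow> 'y \<Rightarrow> bool) \<Rightarrow> bool" where
  "normal_vs conv le \<longleftrightarrow>
     (\<forall>xs ys zs x. (\<forall>n. le (xs n) (ys n) \<and> le (ys n) (zs n)) \<longrightarrow> conv xs x \<longrightarrow> conv zs x
        \<longrightarrow> conv ys x)"

definition cone_metric :: "('y::real_vector \<Rightarrow> 'y \<Rightarrow> bool) \<Rightarrow> ('x \<Rightarrow> 'x \<Rightarrow> 'y) \<Rightarrow> bool" where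
  "cone_metric le d \<longleftrightarrow>
     (\<forall>x y. le 0 (d x y)) \<and> (\<forall>x y. d x y = 0 \<longleftrightarrow> x = y) \<and> (\<forall>x y. d x y = d y x) \<and>
     (\<forall>x y z. le (d x y) (d x z + d z y))"

definition cm_conv :: "('y::real_vector) convergence \<Rightarrow> ('y \<Rightarrow> 'y \<Rightarrow> bool) \<Rightarrow> ('x \<Rightarrow> 'x \<Rightarrow> 'y)
     \<Rightarrow> (nat \<Rightarrow> 'x) \<Rightarrow> 'x \<Rightarrow> bool" where
  "cm_conv conv le d xs x \<longleftrightarrow>
     (\<forall>c. strict_le conv le 0 c \<longrightarrow> (\<forall>\<^sub>F n in sequentially. strict_le conv le (d (xs n) x) c))"

end

theory Submission
  imports Defs
begin

lemma int_iff: "c \<in> interior_conv conv A \<longleftrightarrow> (\<exists>U. U \<subseteq> A \<and> open_conv conv U \<and> c \<in> U)"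
  unfolding interior_conv_def by blast

lemma int_sub: "interior_conv conv A \<subseteq> A"
  unfolding interior_conv_def by blast

lemma const_conv:
  assumes "vs_conv conv" shows "conv (\<lambda>n. c) c"
proof -
  have "conv (\<lambda>n. (\<lambda>n. 1::real) n *\<^sub>R c) (1 *\<^sub>R c)"
    using assms unfolding vs_conv_def by blast
  then show ?thesis by simp
qed

lemma int_scale:
  assumes vs: "vs_conv conv" and cone: "\<forall>r::real. \<forall>x\<in>A. r \<ge> 0 \<longrightarrow> r *\<^sub>R x \<in> A"
    and c: "c \<in> interior_conv conv A" and r: "r > 0"
  shows "r *\<^sub>R c \<in> interior_conv conv A"
proof -
  obtain U where U: "U \<subseteq> A" "open_conv conv U" "c \<in> U" using c int_iff by metis
  let ?V = "(\<lambda>u. r *\<^sub>R u) ` U"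
  have "?V \<subseteq> A" using U cone r by auto
  moreover have "open_conv conv ?V"
    unfolding open_conv_def
  proof (intro allI impI)
    fix ys y assume ys: "conv ys y" and "y \<in> ?V"
    then obtain u where u: "u \<in> U" "y = r *\<^sub>R u" by auto
    have "conv (\<lambda>n. (1/r) *\<^sub>R ys n) ((1/r) *\<^sub>R y)" using vs ys unfolding vs_conv_def by blast
    moreover have "(1/r) *\<^sub>R y = u" using u r by simp
    ultimately have "\<forall>\<^sub>F n in sequentially. (1/r) *\<^sub>R ys n \<in> U"
      using U(2) u(1) unfolding open_conv_def by metis
    then show "\<forall>\<^sub>F n in sequentially. ys n \<in> ?V"
    proof (rule eventually_mono)
      fix n assume "(1/r) *\<^sub>R ys n \<in> U"
      moreover have "ys n = r *\<^sub>R ((1/r) *\<^sub>R ys n)" using r by simp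
      ultimately show "ys n \<in> ?V" by blast
    qed
  qed
  moreover have "r *\<^sub>R c \<in> ?V" using U by auto
  ultimately show ?thesis using int_iff by metis
qed

theorem theorem9p18:
  fixes conv :: "('y::real_vector) convergence" and le :: "'y \<Rightarrow> 'y \<Rightarrow> bool"
    and d :: "'x \<Rightarrow> 'x \<Rightarrow> 'y" and xs :: "nat \<Rightarrow> 'x" and x :: 'x
  assumes "solid_vs conv le" and "normal_vs conv le" and "cone_metric le d"
  shows "cm_conv conv le d xs x \<longleftrightarrow> conv (\<lambda>n. d (xs n) x) 0"
proof -
  have vs: "vs_conv conv" and vo: "vector_ordering conv le" and cone: "is_cone conv (pos_cone le)"
    and ne: "interior_conv conv (pos_cone le) \<noteq> {}"
    using assms(1) unfolding solid_vs_def by auto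
  have C1: "\<And>xs x ys y. conv xs x \<Longrightarrow> conv ys y \<Longrightarrow> conv (\<lambda>n. xs n + ys n) (x + y)"
    using vs unfolding vs_conv_def by blast
  have C2: "\<And>xs x (r::real). conv xs x \<Longrightarrow> conv (\<lambda>n. r *\<^sub>R xs n) (r *\<^sub>R x)"
    using vs unfolding vs_conv_def by blast
  have C3: "\<And>(ls::nat \<Rightarrow> real) l x. ls \<longlonglongrightarrow> l \<Longrightarrow> conv (\<lambda>n. ls n *\<^sub>R x) (l *\<^sub>R x)"
    using vs unfolding vs_conv_def by blast
  have trans: "\<And>x y z. le x y \<Longrightarrow> le y z \<Longrightarrow> le x z" and
    V1: "\<And>x y z. le x y \<Longrightarrow> le (x + z) (y + z)" and
    V2: "\<And>(r::real) x y. r \<ge> 0 \<Longrightarrow> le x y \<Longrightarrow> le (r *\<^sub>R x) (r *\<^sub>R y)"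
    using vo unfolding vector_ordering_def by blast+
  have scal: "\<forall>r::real. \<forall>x\<in>pos_cone le. r \<ge> 0 \<longrightarrow> r *\<^sub>R x \<in> pos_cone le"
    using cone unfolding is_cone_def by blast
  have pos_le: "\<And>a b. le 0 (a - b) \<Longrightarrow> le b a"
  proof -
    fix a b assume "le 0 (a - b)"
    from V1[OF this, of b] show "le b a" by simp
  qed
  let ?K = "interior_conv conv (pos_cone le)"
  define dn where "dn = (\<lambda>n. d (xs n) x)"
  have dpos: "\<And>n. le 0 (dn n)" using assms(3) unfolding cone_metric_def dn_def by blast
  show ?thesis
    unfolding dn_def[symmetric]
  proof
    assume H: "cm_conv conv le d xs x"
    have ev: "\<And>c. c \<in> ?K \<Longrightarrow> \<forall>\<^sub>F n in sequentially. le (dn n) c"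
    proof -
      fix c assume c: "c \<in> ?K"
      have "\<forall>\<^sub>F n in sequentially. strict_le conv le (dn n) c"
        using H c unfolding cm_conv_def strict_le_def dn_def by simp
      then show "\<forall>\<^sub>F n in sequentially. le (dn n) c"
      proof (rule eventually_mono)
        fix n assume "strict_le conv le (dn n) c"
        then have "c - dn n \<in> pos_cone le" using int_sub[of conv "pos_cone le"] unfolding strict_le_def by blast
        then show "le (dn n) c" using pos_le[of c "dn n"] unfolding pos_cone_def by simp
      qed
    qed
    obtain c where c: "c \<in> ?K" using ne by auto
    have cK: "le 0 c" using c int_sub[of conv "pos_cone le"] unfolding pos_cone_def by auto
    have mono: "\<And>y t s. le y (t *\<^sub>R c) \<Longrightarrow> t \<le> s \<Longrightarrow> le y (s *\<^sub>R c)"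
    proof -
      fix y t s assume a: "le y (t *\<^sub>R c)" "(t::real) \<le> s"
      have "le ((s - t) *\<^sub>R 0) ((s-t) *\<^sub>R c)" using V2[of "s - t" 0 c] a(2) cK by simp
      then have "le (0 + t *\<^sub>R c) ((s-t) *\<^sub>R c + t *\<^sub>R c)" using V1[of 0 "(s-t) *\<^sub>R c" "t *\<^sub>R c"] by simp
      then have "le (t *\<^sub>R c) (s *\<^sub>R c)" by (simp add: algebra_simps)
      then show "le y (s *\<^sub>R c)" using a(1) trans by blast
    qed
    have dom: "\<And>y. \<exists>t::real. t > 0 \<and> le y (t *\<^sub>R c)"
    proof -
      fix y
      obtain U where U: "U \<subseteq> pos_cone le" "open_conv conv U" "c \<in> U" using c int_iff by metis
      have "(\<lambda>m. - (1 / (real m + 1))) \<longlonglongrightarrow> - 0"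
      proof (rule tendsto_minus)
        show "(\<lambda>m. 1 / (real m + 1)) \<longlonglongrightarrow> 0"
          using LIMSEQ_inverse_real_of_nat by (simp add: inverse_eq_divide add.commute)
      qed
      then have "conv (\<lambda>m. (- (1 / (real m + 1))) *\<^sub>R y) ((- 0) *\<^sub>R y)" by (rule C3)
      then have "conv (\<lambda>m. c + (- (1 / (real m + 1))) *\<^sub>R y) (c + (- 0) *\<^sub>R y)"
        by (intro C1 const_conv[OF vs])
      then have "\<forall>\<^sub>F m in sequentially. c + (- (1 / (real m + 1))) *\<^sub>R y \<in> U"
        using U unfolding open_conv_def by simp
      then obtain m where "c + (- (1 / (real m + 1))) *\<^sub>R y \<in> U"
        unfolding eventually_sequentially by blast
      then have "le 0 (c - (1 / (real m + 1)) *\<^sub>R y)" using U(1) unfolding pos_cone_def by auto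
      then have "le ((real m + 1) *\<^sub>R 0) ((real m + 1) *\<^sub>R (c - (1 / (real m + 1)) *\<^sub>R y))"
        using V2[of "real m + 1" 0 "c - (1 / (real m + 1)) *\<^sub>R y"] by simp
      moreover have "(real m + 1) *\<^sub>R (c - (1 / (real m + 1)) *\<^sub>R y) = (real m + 1) *\<^sub>R c - y"
        by (simp add: algebra_simps)
      ultimately have "le 0 ((real m + 1) *\<^sub>R c - y)" by simp
      then have "le y ((real m + 1) *\<^sub>R c)" by (rule pos_le)
      then show "\<exists>t::real. t > 0 \<and> le y (t *\<^sub>R c)"
        by (intro exI[of _ "real m + 1"]) simp
    qed
    define T where "T = (\<lambda>n. {t::real. t > 0 \<and> le (dn n) (t *\<^sub>R c)})"
    define e where "e = (\<lambda>n. Inf (T n))"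
    have Tne: "\<And>n. T n \<noteq> {}" using dom unfolding T_def by auto
    have Tbdd: "\<And>n. bdd_below (T n)" unfolding T_def bdd_below_def by (auto intro!: exI[of _ 0])
    have e0: "\<And>n. e n \<ge> 0" unfolding e_def
    proof -
      fix n show "0 \<le> Inf (T n)" by (rule cInf_greatest[OF Tne]) (auto simp: T_def)
    qed
    have eT: "\<And>n (s::real). s > e n \<Longrightarrow> le (dn n) (s *\<^sub>R c)"
    proof -
      fix n and s :: real assume "s > e n"
      then obtain t where t: "t \<in> T n" "t < s" using cInf_lessD[OF Tne] unfolding e_def by blast
      then have "le (dn n) (t *\<^sub>R c)" unfolding T_def by simp
      then show "le (dn n) (s *\<^sub>R c)" using t(2) mono[of "dn n" t s] by simp
    qed
    have ek: "\<And>k::nat. \<forall>\<^sub>F n in sequentially. e n \<le> 1 / (real k + 1)"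
    proof -
      fix k :: nat
      have "(1 / (real k + 1)) *\<^sub>R c \<in> ?K" using int_scale[OF vs scal c] by simp
      from ev[OF this] show "\<forall>\<^sub>F n in sequentially. e n \<le> 1 / (real k + 1)"
      proof (rule eventually_mono)
        fix n assume "le (dn n) ((1 / (real k + 1)) *\<^sub>R c)"
        then have "1 / (real k + 1) \<in> T n" unfolding T_def by simp
        then show "e n \<le> 1 / (real k + 1)" unfolding e_def by (rule cInf_lower[OF _ Tbdd])
      qed
    qed
    define del where "del = (\<lambda>n. e n + 1 / (real n + 1))"
    have del0: "del \<longlonglongrightarrow> 0"
    proof (rule LIMSEQ_I)
      fix r :: real assume r: "r > 0"
      obtain k :: nat where k0: "inverse (real (Suc k)) < r / 2"
        using reals_Archimedean[of "r/2"] r by auto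
      have k: "1 / (real k + 1) < r / 2" using k0 by (simp add: inverse_eq_divide add.commute)
      obtain N where N: "\<And>n. n \<ge> N \<Longrightarrow> e n \<le> 1 / (real k + 1)"
        using ek[of k] unfolding eventually_sequentially by blast
      show "\<exists>no. \<forall>n\<ge>no. norm (del n - 0) < r"
      proof (intro exI allI impI)
        fix n assume n: "max N k \<le> n"
        have "1 / (real n + 1) \<le> 1 / (real k + 1)" using n by (simp add: frac_le)
        then show "norm (del n - 0) < r" using N[of n] n e0[of n] k
          unfolding del_def by simp
      qed
    qed
    have zs: "conv (\<lambda>n. del n *\<^sub>R c) 0" using C3[OF del0, of c] by simp
    have bound: "\<And>n. le (dn n) (del n *\<^sub>R c)"
    proof -
      fix n show "le (dn n) (del n *\<^sub>R c)" unfolding del_def by (rule eT) simp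
    qed
    have zero: "conv (\<lambda>n. 0) 0" by (rule const_conv[OF vs])
    show "conv dn 0"
    proof -
      have "\<forall>xs ys zs x. (\<forall>n. le (xs n) (ys n) \<and> le (ys n) (zs n)) \<longrightarrow> conv xs x \<longrightarrow> conv zs x
        \<longrightarrow> conv ys x" using assms(2) unfolding normal_vs_def by blast
      from this[rule_format, of "\<lambda>n. 0" dn "\<lambda>n. del n *\<^sub>R c" 0]
      show ?thesis using dpos bound zero zs by blast
    qed
  next
    assume H: "conv dn 0"
    show "cm_conv conv le d xs x"
      unfolding cm_conv_def strict_le_def
    proof (intro allI impI)
      fix c assume "c - 0 \<in> ?K"
      then obtain U where U: "U \<subseteq> pos_cone le" "open_conv conv U" "c \<in> U" using int_iff[of "c - 0" conv "pos_cone le"] by auto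
      have "conv (\<lambda>n. c + (-1::real) *\<^sub>R dn n) (c + (-1::real) *\<^sub>R 0)"
        by (intro C1 C2 H const_conv[OF vs])
      then have "\<forall>\<^sub>F n in sequentially. c + (-1::real) *\<^sub>R dn n \<in> U"
        using U unfolding open_conv_def by simp
      then show "\<forall>\<^sub>F n in sequentially. c - d (xs n) x \<in> ?K"
      proof (rule eventually_mono)
        fix n assume "c + (-1::real) *\<^sub>R dn n \<in> U"
        then have "c - d (xs n) x \<in> U" by (simp add: dn_def)
        then show "c - d (xs n) x \<in> ?K" using U int_iff[of "c - d (xs n) x" conv "pos_cone le"] by blast
      qed
    qed
  qed
qed

end
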